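(* Let $G=AB$ be a finite $\pi$-separable group that is the product of subgroups $A$ and $B$, and suppose $G=AB$ is a core-factorisation. Let $H$ be a Hall $\pi$-subgroup of $G$ such that $H=(H\cap A)(H\cap B)$, with $H\cap A$ a Hall $\pi$-subgroup of $A$ and $H\cap B$ a Hall $\pi$-subgroup of $B$ (such an $H$ always exists). Then, if $H\neq 1$, $H=(H\cap A)(H\cap B)$ is also a core-factorisation.
   Context: $\pi$ is a set of primes. A subgroup $U$ of $G$ covers a section $V/W$ ($W\trianglelefteq V\le G$) if $W(U\cap V)=V$. If $1\neq G=AB$ is a product of subgroups $A$ and $B$, then $G=AB$ is called a core-factorisation if $G$ possesses a chief series each of whose chief factors is covered by $A$ or by $B$. *)

theory Defs
  imports "HOL-Algebra.Algebra"
begin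

definition pi_number :: "nat set \<Rightarrow> nat \<Rightarrow> bool" where
  "pi_number \<pi> n \<longleftrightarrow> (\<forall>p. Factorial_Ring.prime p \<and> p dvd n \<longrightarrow> p \<in> \<pi>)"

definition pi'_number :: "nat set \<Rightarrow> nat \<Rightarrow> bool" where
  "pi'_number \<pi> n \<longleftrightarrow> (\<forall>p. Factorial_Ring.prime p \<and> p dvd n \<longrightarrow> p \<notin> \<pi>)"

definition hall_subgroup :: "nat set \<Rightarrow> ('a, 'b) monoid_scheme \<Rightarrow> 'a set \<Rightarrow> bool" where
  "hall_subgroup \<pi> G H \<longleftrightarrow> subgroup H G \<and> pi_number \<pi> (card H)
      \<and> pi'_number \<pi> (card (carrier G) div card H)"

definition pi_separable :: "nat set \<Rightarrow> ('a, 'b) monoid_scheme \<Rightarrow> bool" where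
  "pi_separable \<pi> G \<longleftrightarrow> (\<exists>n s. s 0 = {\<one>\<^bsub>G\<^esub>} \<and> s n = carrier G \<and>
      (\<forall>i\<le>n. s i \<lhd> G) \<and>
      (\<forall>i<n. s i \<subseteq> s (Suc i) \<and>
         (pi_number \<pi> (card (s (Suc i)) div card (s i)) \<or>
          pi'_number \<pi> (card (s (Suc i)) div card (s i)))))"

definition chief_series :: "('a, 'b) monoid_scheme \<Rightarrow> nat \<Rightarrow> (nat \<Rightarrow> 'a set) \<Rightarrow> bool" where
  "chief_series G n s \<longleftrightarrow> s 0 = {\<one>\<^bsub>G\<^esub>} \<and> s n = carrier G \<and>
      (\<forall>i\<le>n. s i \<lhd> G) \<and>
      (\<forall>i<n. s i \<subset> s (Suc i) \<and>
         \<not> (\<exists>N. N \<lhd> G \<and> s i \<subset> N \<and> N \<subset> s (Suc i)))"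

definition covers :: "('a, 'b) monoid_scheme \<Rightarrow> 'a set \<Rightarrow> 'a set \<Rightarrow> 'a set \<Rightarrow> bool" where
  "covers G U V W \<longleftrightarrow> W <#>\<^bsub>G\<^esub> (U \<inter> V) = V"

definition core_factorisation :: "('a, 'b) monoid_scheme \<Rightarrow> 'a set \<Rightarrow> 'a set \<Rightarrow> bool" where
  "core_factorisation G A B \<longleftrightarrow> carrier G \<noteq> {\<one>\<^bsub>G\<^esub>} \<and> subgroup A G \<and> subgroup B G \<and>
      A <#>\<^bsub>G\<^esub> B = carrier G \<and>
      (\<exists>n s. chief_series G n s \<and>
         (\<forall>i<n. covers G A (s (Suc i)) (s i) \<or> covers G B (s (Suc i)) (s i)))"

end

theory Submission imports Defs "HOL-Computational_Algebra.Primes" begin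


lemma pi_mult: "pi_number \<pi> a \<Longrightarrow> pi_number \<pi> b \<Longrightarrow> pi_number \<pi> (a*b)"
  unfolding pi_number_def by (metis prime_dvd_mult_iff)
lemma pi'_mult: "pi'_number \<pi> a \<Longrightarrow> pi'_number \<pi> b \<Longrightarrow> pi'_number \<pi> (a*b)"
  unfolding pi'_number_def by (metis prime_dvd_mult_iff)
lemma pi_dvd: "pi_number \<pi> b \<Longrightarrow> a dvd b \<Longrightarrow> pi_number \<pi> a"
  unfolding pi_number_def by (meson dvd_trans)
lemma pi'_dvd: "pi'_number \<pi> b \<Longrightarrow> a dvd b \<Longrightarrow> pi'_number \<pi> a"
  unfolding pi'_number_def by (meson dvd_trans)
lemma pi_coprime: "pi_number \<pi> a \<Longrightarrow> pi'_number \<pi> b \<Longrightarrow> coprime a b"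
proof (rule ccontr)
  assume a: "pi_number \<pi> a" "pi'_number \<pi> b" "\<not> coprime a b"
  then have "gcd a b \<noteq> 1" by (simp add: coprime_iff_gcd_eq_1)
  then obtain p where p: "Factorial_Ring.prime p" "p dvd gcd a b" using prime_factor_nat by blast
  then show False using a unfolding pi_number_def pi'_number_def by auto
qed
lemma pi_unique:
  fixes a b c d :: nat
  assumes "a * c = b * d" "pi_number \<pi> a" "pi_number \<pi> b" "pi'_number \<pi> c" "pi'_number \<pi> d"
  shows "a = b"
proof -
  have "a dvd b * d" using assms(1) by (metis dvd_triv_left)
  moreover have "coprime a d" using pi_coprime assms by blast
  ultimately have 1: "a dvd b" using coprime_dvd_mult_left_iff by blast
  have "b dvd a * c" using assms(1) by (metis dvd_triv_left)
  moreover have "coprime b c" using pi_coprime assms by blast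
  ultimately have "b dvd a" using coprime_dvd_mult_left_iff by blast
  with 1 show ?thesis by (simp add: dvd_antisym)
qed

lemma (in group) card_set_mult:
  assumes S1: "subgroup S1 G" and S2: "subgroup S2 G" and fin: "finite (carrier G)"
  shows "card (S1 <#> S2) * card (S1 \<inter> S2) = card S1 * card S2"
proof -
  define fib where "fib z = {p \<in> S1 \<times> S2. fst p \<otimes> snd p = z}" for z
  have S1G: "S1 \<subseteq> carrier G" and S2G: "S2 \<subseteq> carrier G" using S1 S2 subgroup.subset by auto
  have finS1: "finite S1" and finS2: "finite S2" using S1G S2G fin finite_subset by auto
  have finS1Y: "finite (S1 <#> S2)" using setmult_subset_G[OF S1G S2G] fin finite_subset by blast
  have cover: "S1 \<times> S2 = (\<Union>z\<in>S1<#>S2. fib z)"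
  proof
    show "S1 \<times> S2 \<subseteq> (\<Union>z\<in>S1<#>S2. fib z)"
    proof
      fix p assume "p \<in> S1 \<times> S2"
      then obtain a b where "p = (a,b)" "a \<in> S1" "b \<in> S2" by auto
      then show "p \<in> (\<Union>z\<in>S1<#>S2. fib z)" unfolding fib_def set_mult_def by auto
    qed
  qed (auto simp: fib_def)
  have fc: "card (fib z) = card (S1 \<inter> S2)" if z: "z \<in> S1 <#> S2" for z
  proof -
    obtain x y where xy: "x \<in> S1" "y \<in> S2" "z = x \<otimes> y" using z unfolding set_mult_def by auto
    have xG: "x \<in> carrier G" and yG: "y \<in> carrier G" using xy S1G S2G by auto
    have "bij_betw (\<lambda>t. (x \<otimes> t, inv t \<otimes> y)) (S1 \<inter> S2) (fib z)"
    proof (rule bij_betwI')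
      fix t t' assume "t \<in> S1 \<inter> S2" "t' \<in> S1 \<inter> S2"
      then show "((x \<otimes> t, inv t \<otimes> y) = (x \<otimes> t', inv t' \<otimes> y)) = (t = t')"
        using xG S1G l_cancel[of x t t'] by (metis IntD1 Pair_inject in_mono)
    next
      fix t assume t: "t \<in> S1 \<inter> S2"
      then have tG: "t \<in> carrier G" using S1G by auto
      have "x \<otimes> t \<otimes> (inv t \<otimes> y) = x \<otimes> y" using tG xG yG by (simp add: m_assoc) (simp add: m_assoc[symmetric])
      then show "(x \<otimes> t, inv t \<otimes> y) \<in> fib z"
        unfolding fib_def using t xy S1 S2 by (auto intro: subgroup.m_closed subgroup.m_inv_closed)
    next
      fix p assume p: "p \<in> fib z"
      obtain a b where ab: "p = (a, b)" "a \<in> S1" "b \<in> S2" "a \<otimes> b = x \<otimes> y"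
        using p xy unfolding fib_def by auto
      have aG: "a \<in> carrier G" and bG: "b \<in> carrier G" using ab S1G S2G by auto
      define t where "t = inv x \<otimes> a"
      have tS1: "t \<in> S1" unfolding t_def using S1 xy ab by (auto intro: subgroup.m_closed subgroup.m_inv_closed)
      have "t = y \<otimes> inv b"
      proof -
        have "inv x \<otimes> (a \<otimes> b) \<otimes> inv b = inv x \<otimes> (x \<otimes> y) \<otimes> inv b" using ab by simp
        then show ?thesis unfolding t_def using aG bG xG yG by (simp add: m_assoc) (simp add: m_assoc[symmetric])
      qed
      then have tS2: "t \<in> S2" using S2 xy ab by (auto intro: subgroup.m_closed subgroup.m_inv_closed)
      have tG: "t \<in> carrier G" using tS1 S1G by auto
      have e1: "x \<otimes> t = a" unfolding t_def using xG aG by (simp add: m_assoc[symmetric])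
      have "inv t \<otimes> y = b"
      proof -
        have "inv t \<otimes> y = inv a \<otimes> x \<otimes> y" unfolding t_def using xG aG by (simp add: inv_mult_group)
        also have "\<dots> = inv a \<otimes> (a \<otimes> b)" using ab xG yG aG by (simp add: m_assoc)
        also have "\<dots> = b" using aG bG by (simp add: m_assoc[symmetric])
        finally show ?thesis .
      qed
      then show "\<exists>t\<in>S1 \<inter> S2. p = (x \<otimes> t, inv t \<otimes> y)" using tS1 tS2 e1 ab by auto
    qed
    then show ?thesis by (metis bij_betw_same_card)
  qed
  have "card S1 * card S2 = card (S1 \<times> S2)" by (simp add: card_cartesian_product)
  also have "\<dots> = (\<Sum>z\<in>S1<#>S2. card (fib z))" unfolding cover
  proof (rule card_UN_disjoint[OF finS1Y])
    show "\<forall>i\<in>S1 <#> S2. finite (fib i)" unfolding fib_def using finS1 finS2 by auto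
    show "\<forall>i\<in>S1 <#> S2. \<forall>j\<in>S1 <#> S2. i \<noteq> j \<longrightarrow> fib i \<inter> fib j = {}" unfolding fib_def by auto
  qed
  also have "\<dots> = card (S1 <#> S2) * card (S1 \<inter> S2)" using fc by simp
  finally show ?thesis by simp
qed


lemma (in group) card_subgroup_dvd:
  assumes "subgroup S1 G" "subgroup S2 G" "S1 \<subseteq> S2"
  shows "card S1 dvd card S2"
proof -
  have "group (G\<lparr>carrier := S2\<rparr>)" using assms subgroup_imp_group by blast
  moreover have "subgroup S1 (G\<lparr>carrier := S2\<rparr>)" using subgroup_incl assms by blast
  ultimately have "card (rcosets\<^bsub>G\<lparr>carrier := S2\<rparr>\<^esub> S1) * card S1 = order (G\<lparr>carrier := S2\<rparr>)"
    using group.lagrange by blast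
  then show ?thesis unfolding order_def by (metis dvd_triv_right partial_object.select_convs(1) partial_object.surjective partial_object.update_convs(1))
qed

lemma (in group) hall_normal:
  assumes fin: "finite (carrier G)" and hall: "hall_subgroup \<pi> G H" and K: "K \<lhd> G"
  shows "pi_number \<pi> (card (H \<inter> K)) \<and> (\<exists>c. card K = card (H \<inter> K) * c \<and> pi'_number \<pi> c)"
proof -
  have H: "subgroup H G" and piH: "pi_number \<pi> (card H)" and pi'H: "pi'_number \<pi> (card (carrier G) div card H)"
    using hall unfolding hall_subgroup_def by auto
  have Ks: "subgroup K G" using K normal_imp_subgroup by blast
  have KH: "subgroup (K <#> H) G"
    using second_isomorphism_grp.normal_set_mult_subgroup K H
    unfolding second_isomorphism_grp_def second_isomorphism_grp_axioms_def by force
  have HKH: "H \<subseteq> K <#> H"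
  proof
    fix h assume "h \<in> H"
    then have "\<one> \<otimes> h \<in> K <#> H" unfolding set_mult_def using Ks subgroup.one_closed by blast
    then show "h \<in> K <#> H" using \<open>h \<in> H\<close> H subgroup.mem_carrier by fastforce
  qed
  have fH: "finite H" using H fin subgroup.subset finite_subset by blast
  have cH: "card H > 0" using fH H subgroup.one_closed card_gt_0_iff by blast
  obtain m where m: "card (K <#> H) = card H * m" using card_subgroup_dvd[OF H KH HKH] by blast
  obtain e where e: "card (carrier G) = card (K <#> H) * e"
    using card_subgroup_dvd[OF KH subgroup_self] KH subgroup.subset by blast
  have "card (carrier G) div card H = m * e" using m e cH by simp
  then have pm: "pi'_number \<pi> m" using pi'H pi'_dvd by (metis dvd_triv_left)
  have "card (K <#> H) * card (K \<inter> H) = card K * card H" using card_set_mult[OF Ks H fin] .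
  then have "card K = card (H \<inter> K) * m" using m cH by (simp add: Int_commute mult.commute mult.left_commute)
  moreover have "pi_number \<pi> (card (H \<inter> K))"
    using card_subgroup_dvd[of "H \<inter> K" H] H Ks subgroups_Inter_pair piH pi_dvd by blast
  ultimately show ?thesis using pm by blast
qed



lemma (in group) key_cover:
  assumes fin: "finite (carrier G)" and hall: "hall_subgroup \<pi> G H" and A: "subgroup A G"
    and hallA: "hall_subgroup \<pi> (G\<lparr>carrier := A\<rparr>) (H \<inter> A)"
    and P: "P \<lhd> G" and Q: "Q \<lhd> G" and PQ: "P \<subseteq> Q"
    and cov: "P <#> (A \<inter> Q) = Q"
  shows "(H \<inter> P) <#> (H \<inter> A \<inter> Q) = H \<inter> Q"
proof -
  have H: "subgroup H G" using hall unfolding hall_subgroup_def by auto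
  have Ps: "subgroup P G" and Qs: "subgroup Q G" using P Q normal_imp_subgroup by auto
  have AQ: "subgroup (A \<inter> Q) G" using A Qs subgroups_Inter_pair by blast
  have AP: "subgroup (A \<inter> P) G" using A Ps subgroups_Inter_pair by blast
  have fA: "finite A" using finite_subset[OF subgroup.subset[OF A] fin] .
  have GA: "group (G\<lparr>carrier := A\<rparr>)" using A subgroup_imp_group by blast
  have finA: "finite (carrier (G\<lparr>carrier := A\<rparr>))" using fA by simp
  have "card (P <#> (A \<inter> Q)) * card (P \<inter> (A \<inter> Q)) = card P * card (A \<inter> Q)"
    using card_set_mult[OF Ps AQ fin] .
  moreover have "P \<inter> (A \<inter> Q) = A \<inter> P" using PQ by auto
  ultimately have eq1: "card Q * card (A \<inter> P) = card P * card (A \<inter> Q)" using cov by simp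
  obtain c where c: "card Q = card (H \<inter> Q) * c" "pi'_number \<pi> c" and a: "pi_number \<pi> (card (H \<inter> Q))"
    using hall_normal[OF fin hall Q] by blast
  obtain c0 where c0: "card P = card (H \<inter> P) * c0" "pi'_number \<pi> c0" and a0: "pi_number \<pi> (card (H \<inter> P))"
    using hall_normal[OF fin hall P] by blast
  have QA: "Q \<inter> A \<lhd> G\<lparr>carrier := A\<rparr>" using normal_Int_subgroup[OF A Q] .
  have PA: "P \<inter> A \<lhd> G\<lparr>carrier := A\<rparr>" using normal_Int_subgroup[OF A P] .
  obtain d where d: "card (Q \<inter> A) = card (H \<inter> A \<inter> (Q \<inter> A)) * d" "pi'_number \<pi> d"
    and b: "pi_number \<pi> (card (H \<inter> A \<inter> (Q \<inter> A)))"
    using group.hall_normal[OF GA finA hallA QA] by blast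
  obtain d0 where d0: "card (P \<inter> A) = card (H \<inter> A \<inter> (P \<inter> A)) * d0" "pi'_number \<pi> d0"
    and b0: "pi_number \<pi> (card (H \<inter> A \<inter> (P \<inter> A)))"
    using group.hall_normal[OF GA finA hallA PA] by blast
  have s1: "H \<inter> A \<inter> (Q \<inter> A) = H \<inter> A \<inter> Q" by auto
  have s2: "H \<inter> A \<inter> (P \<inter> A) = H \<inter> A \<inter> P" by auto
  define xa where "xa = card (H \<inter> Q)"
  define xa0 where "xa0 = card (H \<inter> P)"
  define xb where "xb = card (H \<inter> A \<inter> Q)"
  define xb0 where "xb0 = card (H \<inter> A \<inter> P)"
  have e: "(xa * xb0) * (c * d0) = (xa0 * xb) * (c0 * d)"
  proof -
    have "card Q * card (A \<inter> P) = (xa * c) * (xb0 * d0)"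
      using c d0 s2 by (simp add: xa_def xb0_def Int_commute)
    moreover have "card P * card (A \<inter> Q) = (xa0 * c0) * (xb * d)"
      using c0 d s1 by (simp add: xa0_def xb_def Int_commute)
    ultimately show ?thesis using eq1 by (simp add: ac_simps)
  qed
  have eab: "xa * xb0 = xa0 * xb"
    by (rule pi_unique[OF e]) (use a a0 b b0 c c0 d d0 s1 s2 in
      \<open>auto simp: xa_def xb_def xa0_def xb0_def intro: pi_mult pi'_mult\<close>)
  have HP: "subgroup (H \<inter> P) G" using H Ps subgroups_Inter_pair by blast
  have HAQ: "subgroup (H \<inter> A \<inter> Q) G" using H A Qs subgroups_Inter_pair by blast
  have HQ: "subgroup (H \<inter> Q) G" using H Qs subgroups_Inter_pair by blast
  have HAP: "subgroup (H \<inter> A \<inter> P) G" using H A Ps subgroups_Inter_pair by blast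
  have "card ((H \<inter> P) <#> (H \<inter> A \<inter> Q)) * card ((H \<inter> P) \<inter> (H \<inter> A \<inter> Q)) = xa0 * xb"
    using card_set_mult[OF HP HAQ fin] by (simp add: xa0_def xb_def)
  moreover have "(H \<inter> P) \<inter> (H \<inter> A \<inter> Q) = H \<inter> A \<inter> P" using PQ by auto
  moreover have "xb0 > 0"
  proof -
    have "finite (H \<inter> A \<inter> P)" using fA by auto
    moreover have "\<one> \<in> H \<inter> A \<inter> P" using HAP subgroup.one_closed by blast
    ultimately show ?thesis unfolding xb0_def using card_gt_0_iff by blast
  qed
  ultimately have "card ((H \<inter> P) <#> (H \<inter> A \<inter> Q)) * xb0 = xa * xb0"
    using eab by (simp add: xb0_def)
  then have cardeq: "card ((H \<inter> P) <#> (H \<inter> A \<inter> Q)) = card (H \<inter> Q)"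
    using \<open>xb0 > 0\<close> unfolding xa_def by simp
  have sub: "(H \<inter> P) <#> (H \<inter> A \<inter> Q) \<subseteq> H \<inter> Q"
  proof
    fix z assume "z \<in> (H \<inter> P) <#> (H \<inter> A \<inter> Q)"
    then obtain x y where "x \<in> H \<inter> P" "y \<in> H \<inter> A \<inter> Q" "z = x \<otimes> y" unfolding set_mult_def by auto
    moreover have "x \<in> H \<inter> Q" "y \<in> H \<inter> Q" using calculation PQ by auto
    ultimately show "z \<in> H \<inter> Q" using subgroup.m_closed[OF HQ] by simp
  qed
  have "finite (H \<inter> Q)" using finite_subset[OF subgroup.subset[OF HQ] fin] .
  then show ?thesis using card_subset_eq sub cardeq by blast
qed

lemma (in group) sub_cover:
  assumes cov: "S1 <#> (U \<inter> S2) = S2" and M: "subgroup M G" and M': "subgroup M' G"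
    and "S1 \<subseteq> M" "M \<subseteq> M'" "M' \<subseteq> S2" and S2G: "S2 \<subseteq> carrier G"
  shows "M <#> (U \<inter> M') = M'"
proof
  show "M <#> (U \<inter> M') \<subseteq> M'"
  proof
    fix z assume "z \<in> M <#> (U \<inter> M')"
    then obtain x y where "x \<in> M" "y \<in> M'" "z = x \<otimes> y" unfolding set_mult_def by auto
    then show "z \<in> M'" using subgroup.m_closed[OF M'] \<open>M \<subseteq> M'\<close> by auto
  qed
next
  show "M' \<subseteq> M <#> (U \<inter> M')"
  proof
    fix z assume z: "z \<in> M'"
    then have "z \<in> S1 <#> (U \<inter> S2)" using cov assms by auto
    then obtain x y where xy: "x \<in> S1" "y \<in> U \<inter> S2" "z = x \<otimes> y" unfolding set_mult_def by auto
    have xG: "x \<in> carrier G" using xy(1) assms(4-7) by blast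
    have yG: "y \<in> carrier G" using xy(2) S2G by blast
    have "y = inv x \<otimes> z" using xy xG yG by (simp add: m_assoc[symmetric])
    moreover have "inv x \<in> M'" using xy assms subgroup.m_inv_closed[OF M'] by blast
    moreover have "inv x \<otimes> z \<in> M'" using subgroup.m_closed[OF M' \<open>inv x \<in> M'\<close> z] .
    ultimately have "y \<in> M'" by simp
    then show "z \<in> M <#> (U \<inter> M')" using xy assms unfolding set_mult_def by auto
  qed
qed



definition good :: "('a, 'b) monoid_scheme \<Rightarrow> 'a set \<Rightarrow> 'a set \<Rightarrow> 'a set \<Rightarrow> bool" where
  "good K U V W \<longleftrightarrow> (\<exists>n s. s 0 = {\<one>\<^bsub>K\<^esub>} \<and> s n = W \<and> (\<forall>i\<le>n. s i \<lhd> K) \<and>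
     (\<forall>i<n. s i \<subset> s (Suc i) \<and> \<not> (\<exists>N. N \<lhd> K \<and> s i \<subset> N \<and> N \<subset> s (Suc i)) \<and>
        (covers K U (s (Suc i)) (s i) \<or> covers K V (s (Suc i)) (s i))))"

lemma good_one: "group K \<Longrightarrow> good K U V {\<one>\<^bsub>K\<^esub>}"
  unfolding good_def by (rule exI[of _ 0], rule exI[of _ "\<lambda>_. {\<one>\<^bsub>K\<^esub>}"]) (simp add: group.one_is_normal)

lemma good_step:
  assumes "good K U V W" "N \<lhd> K" "W \<subset> N" "\<not> (\<exists>N'. N' \<lhd> K \<and> W \<subset> N' \<and> N' \<subset> N)"
    "covers K U N W \<or> covers K V N W"
  shows "good K U V N"
proof -
  obtain n s where s: "s 0 = {\<one>\<^bsub>K\<^esub>}" "s n = W" "\<forall>i\<le>n. s i \<lhd> K"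
    "\<forall>i<n. s i \<subset> s (Suc i) \<and> \<not> (\<exists>N. N \<lhd> K \<and> s i \<subset> N \<and> N \<subset> s (Suc i)) \<and>
        (covers K U (s (Suc i)) (s i) \<or> covers K V (s (Suc i)) (s i))"
    using assms(1) unfolding good_def by blast
  define s' where "s' = s(Suc n := N)"
  have "s' 0 = {\<one>\<^bsub>K\<^esub>}" "s' (Suc n) = N" using s by (auto simp: s'_def)
  moreover have "\<forall>i\<le>Suc n. s' i \<lhd> K" using s assms by (auto simp: s'_def le_Suc_eq)
  moreover have "\<forall>i<Suc n. s' i \<subset> s' (Suc i) \<and> \<not> (\<exists>N. N \<lhd> K \<and> s' i \<subset> N \<and> N \<subset> s' (Suc i)) \<and>
        (covers K U (s' (Suc i)) (s' i) \<or> covers K V (s' (Suc i)) (s' i))"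
  proof (intro allI impI)
    fix i assume "i < Suc n"
    then consider "i < n" | "i = n" by linarith
    then show "s' i \<subset> s' (Suc i) \<and> \<not> (\<exists>N. N \<lhd> K \<and> s' i \<subset> N \<and> N \<subset> s' (Suc i)) \<and>
        (covers K U (s' (Suc i)) (s' i) \<or> covers K V (s' (Suc i)) (s' i))"
    proof cases
      case 1 then show ?thesis using s by (auto simp: s'_def)
    next
      case 2 then show ?thesis using s assms by (auto simp: s'_def)
    qed
  qed
  ultimately show ?thesis unfolding good_def by blast
qed

lemma good_extend:
  assumes grp: "group K" and fin: "finite (carrier K)"
  shows "good K U V W \<Longrightarrow> W \<lhd> K \<Longrightarrow> Y \<lhd> K \<Longrightarrow> W \<subseteq> Y \<Longrightarrow>
    (\<forall>M M'. M \<lhd> K \<longrightarrow> M' \<lhd> K \<longrightarrow> W \<subseteq> M \<longrightarrow> M \<subseteq> M' \<longrightarrow> M' \<subseteq> Y \<longrightarrow>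
        covers K U M' M \<or> covers K V M' M) \<Longrightarrow> good K U V Y"
proof (induction "card Y - card W" arbitrary: W rule: less_induct)
  case less
  have finsub: "finite N" if "N \<lhd> K" for N
    using that normal_imp_subgroup subgroup.subset fin finite_subset by metis
  show ?case
  proof (cases "W = Y")
    case True then show ?thesis using less by simp
  next
    case False
    then have WY: "W \<subset> Y" using less by auto
    define P where "P N \<longleftrightarrow> N \<lhd> K \<and> W \<subset> N \<and> N \<subseteq> Y" for N
    have "P Y" using less WY by (simp add: P_def)
    then obtain N where N: "P N" and Nmin: "\<forall>N'. P N' \<longrightarrow> card N \<le> card N'"
      using ex_has_least_nat[of P Y card] by blast
    have nomid: "\<not> (\<exists>N'. N' \<lhd> K \<and> W \<subset> N' \<and> N' \<subset> N)"
    proof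
      assume "\<exists>N'. N' \<lhd> K \<and> W \<subset> N' \<and> N' \<subset> N"
      then obtain N' where N': "N' \<lhd> K" "W \<subset> N'" "N' \<subset> N" by blast
      then have "P N'" using N by (auto simp: P_def)
      moreover have "card N' < card N" using N' N finsub P_def psubset_card_mono by blast
      ultimately show False using Nmin by fastforce
    qed
    have NK: "N \<lhd> K" and WN: "W \<subset> N" and NY: "N \<subseteq> Y" using N by (auto simp: P_def)
    have gN: "good K U V N"
      by (rule good_step[OF less.prems(1) NK WN nomid]) (use less.prems NK WN NY in blast)
    have "card W < card N" using WN finsub NK psubset_card_mono by blast
    moreover have "card N \<le> card Y" using NY finsub less.prems(3) card_mono by blast
    ultimately have lt: "card Y - card N < card Y - card W" by linarith
    show ?thesis
      by (rule less.hyps[OF lt gN NK less.prems(3) NY]) (use less.prems WN in blast)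
  qed
qed

lemma set_mult_upd: "S1 <#>\<^bsub>G\<lparr>carrier := H\<rparr>\<^esub> S2 = S1 <#>\<^bsub>G\<^esub> S2"
  by (simp add: set_mult_def)

lemma (in group) cover_in_H:
  assumes fin: "finite (carrier G)" and hall: "hall_subgroup \<pi> G H" and A: "subgroup A G"
    and hallA: "hall_subgroup \<pi> (G\<lparr>carrier := A\<rparr>) (H \<inter> A)"
    and P: "P \<lhd> G" and Q: "Q \<lhd> G" and PQ: "P \<subseteq> Q"
    and cov: "covers G A Q P"
    and M: "M \<lhd> G\<lparr>carrier := H\<rparr>" and M': "M' \<lhd> G\<lparr>carrier := H\<rparr>"
    and "H \<inter> P \<subseteq> M" "M \<subseteq> M'" "M' \<subseteq> H \<inter> Q"
  shows "covers (G\<lparr>carrier := H\<rparr>) (H \<inter> A) M' M"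
proof -
  have H: "subgroup H G" using hall unfolding hall_subgroup_def by auto
  have k: "(H \<inter> P) <#> (H \<inter> A \<inter> Q) = H \<inter> Q"
    using key_cover[OF fin hall A hallA P Q PQ] cov unfolding covers_def by blast
  have k': "(H \<inter> P) <#> ((H \<inter> A) \<inter> (H \<inter> Q)) = H \<inter> Q"
    using k by (simp add: Int_assoc Int_left_commute Int_absorb)
  have Ms: "subgroup M G" "subgroup M' G"
    using M M' normal_imp_subgroup incl_subgroup[OF H] by blast+
  have "M <#> ((H \<inter> A) \<inter> M') = M'"
    by (rule sub_cover[OF k' Ms]) (use assms H subgroup.subset[OF H] in auto)
  then show ?thesis unfolding covers_def set_mult_upd .
qed

theorem mainTheorem2:
  fixes G :: "('a, 'b) monoid_scheme" and \<pi> :: "nat set" and A B H :: "'a set"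
  assumes "group G" and "finite (carrier G)"
    and "\<forall>p\<in>\<pi>. Factorial_Ring.prime p"
    and "pi_separable \<pi> G"
    and "subgroup A G" and "subgroup B G" and "A <#>\<^bsub>G\<^esub> B = carrier G"
    and "core_factorisation G A B"
    and "hall_subgroup \<pi> G H"
    and "H = (H \<inter> A) <#>\<^bsub>G\<^esub> (H \<inter> B)"
    and "hall_subgroup \<pi> (G\<lparr>carrier := A\<rparr>) (H \<inter> A)"
    and "hall_subgroup \<pi> (G\<lparr>carrier := B\<rparr>) (H \<inter> B)"
    and "H \<noteq> {\<one>\<^bsub>G\<^esub>}"
  shows "core_factorisation (G\<lparr>carrier := H\<rparr>) (H \<inter> A) (H \<inter> B)"
proof -
  interpret group G by (rule assms(1))
  note fin = assms(2) and hall = assms(9) and A = assms(5) and B = assms(6)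
  note hallA = assms(11) and hallB = assms(12)
  have H: "subgroup H G" using hall unfolding hall_subgroup_def by auto
  define GH where "GH = G\<lparr>carrier := H\<rparr>"
  have gGH: "group GH" unfolding GH_def using H subgroup_imp_group by blast
  have "finite H" using subgroup.subset[OF H] fin by (rule finite_subset)
  then have finGH: "finite (carrier GH)" unfolding GH_def by simp
  obtain n s where cs: "chief_series G n s"
    and cov: "\<forall>i<n. covers G A (s (Suc i)) (s i) \<or> covers G B (s (Suc i)) (s i)"
    using assms(8) unfolding core_factorisation_def by blast
  have s0: "s 0 = {\<one>\<^bsub>G\<^esub>}" and sn: "s n = carrier G" and sN: "\<forall>i\<le>n. s i \<lhd> G"
    and sinc: "\<forall>i<n. s i \<subset> s (Suc i)"
    using cs unfolding chief_series_def by auto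
  have HN: "H \<inter> s i \<lhd> GH" if "i \<le> n" for i
    using normal_Int_subgroup[OF H, of "s i"] sN that unfolding GH_def by (simp add: Int_commute)
  have "good GH (H \<inter> A) (H \<inter> B) (H \<inter> s i)" if "i \<le> n" for i
    using that
  proof (induction i)
    case 0
    have "H \<inter> s 0 = {\<one>\<^bsub>GH\<^esub>}" using s0 H subgroup.one_closed unfolding GH_def by auto
    then show ?case using good_one[OF gGH] by simp
  next
    case (Suc i)
    then have i: "i < n" by simp
    have IH: "good GH (H \<inter> A) (H \<inter> B) (H \<inter> s i)" using Suc by simp
    show ?case
    proof (rule good_extend[OF gGH finGH IH HN HN])
      show "i \<le> n" "Suc i \<le> n" using i by auto
      show "H \<inter> s i \<subseteq> H \<inter> s (Suc i)" using sinc i by auto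
      show "\<forall>M M'. M \<lhd> GH \<longrightarrow> M' \<lhd> GH \<longrightarrow> H \<inter> s i \<subseteq> M \<longrightarrow> M \<subseteq> M' \<longrightarrow> M' \<subseteq> H \<inter> s (Suc i) \<longrightarrow>
          covers GH (H \<inter> A) M' M \<or> covers GH (H \<inter> B) M' M"
      proof (intro allI impI)
        fix M M' assume MM: "M \<lhd> GH" "M' \<lhd> GH" "H \<inter> s i \<subseteq> M" "M \<subseteq> M'" "M' \<subseteq> H \<inter> s (Suc i)"
        have P: "s i \<lhd> G" and Q: "s (Suc i) \<lhd> G" and PQ: "s i \<subseteq> s (Suc i)" using sN sinc i by auto
        from cov i consider "covers G A (s (Suc i)) (s i)" | "covers G B (s (Suc i)) (s i)" by blast
        then show "covers GH (H \<inter> A) M' M \<or> covers GH (H \<inter> B) M' M"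
        proof cases
          case 1
          then show ?thesis using cover_in_H[OF fin hall A hallA P Q PQ 1 MM(1,2)[unfolded GH_def] MM(3-5)]
            unfolding GH_def by simp
        next
          case 2
          then show ?thesis using cover_in_H[OF fin hall B hallB P Q PQ 2 MM(1,2)[unfolded GH_def] MM(3-5)]
            unfolding GH_def by simp
        qed
      qed
    qed
  qed
  then have "good GH (H \<inter> A) (H \<inter> B) H" using sn H subgroup.subset[OF H]
    by (metis Int_absorb2 order_refl)
  then obtain m t where t: "t 0 = {\<one>\<^bsub>GH\<^esub>}" "t m = H" "\<forall>i\<le>m. t i \<lhd> GH"
    "\<forall>i<m. t i \<subset> t (Suc i) \<and> \<not> (\<exists>N. N \<lhd> GH \<and> t i \<subset> N \<and> N \<subset> t (Suc i)) \<and>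
        (covers GH (H \<inter> A) (t (Suc i)) (t i) \<or> covers GH (H \<inter> B) (t (Suc i)) (t i))"
    unfolding good_def by blast
  have "chief_series GH m t" unfolding chief_series_def using t by (simp add: GH_def)
  moreover have "subgroup (H \<inter> A) GH" "subgroup (H \<inter> B) GH"
    unfolding GH_def using subgroup_incl H A B subgroups_Inter_pair by auto
  moreover have "(H \<inter> A) <#>\<^bsub>GH\<^esub> (H \<inter> B) = carrier GH"
    unfolding GH_def set_mult_upd using assms(10) by simp
  moreover have "carrier GH \<noteq> {\<one>\<^bsub>GH\<^esub>}" unfolding GH_def using assms(13) by simp
  ultimately show ?thesis unfolding core_factorisation_def GH_def[symmetric] using t by blast
qed

end
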